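(* Let $A\in\mathbb{R}^{m\times n}_+$ with every row containing a positive entry, $(r,c)\in\mathbb{R}^m_{++}\times\mathbb{R}^n_{++}$ with $\langle r,1_m\rangle=\langle c,1_n\rangle$, $y\in\mathbb{R}^n_{++}$, and let $\emptyset\ne T\subsetneq[n]$ have margin $\gamma>0$. Let $h:=h^{A,r,y}_T$. If $\sum_{i\in N(T)}r_i\ge\sum_{j\in T}c_j$, then for any $\delta\in[0,\gamma)$ there is a finite solution $\alpha<\infty$ to the equation $h(\alpha)=h(1)+\delta$.
   Context: $N(T):=\{i\in[m]:\exists j\in T,\ A_{ij}>0\}$. For $y\in\mathbb{R}^n_{++}$ define $c^{A,r}_j(y):=\sum_{i\in[m]}r_i\frac{A_{ij}y_j}{\sum_{k\in[n]}A_{ik}y_k}$ (the column sums after row-normalizing $A\,\mathrm{diag}(y)$ to row sums $r$). The margin of $T$ is the largest $\gamma\ge0$ such that some $\nu\in\mathbb{R}$ satisfies $\max_{j\in T}(c^{A,r}_j(y)-c_j)\le\nu-\gamma\le\nu+\gamma\le\min_{j\notin T}(c^{A,r}_j(y)-c_j)$. The proxy function is $h^{A,r,y}_T(\alpha):=\sum_{j\in T}c^{A,r}_j(y\circ(1_{\bar T}+\alpha1_T))=\sum_{i\in N(T)}r_i\frac{\alpha\mu_i}{1+(\alpha-1)\mu_i}$ with $\mu_i:=\frac{\sum_{j\in T}A_{ij}y_j}{\sum_{j\in[n]}A_{ij}y_j}$, where $\bar T=[n]\setminus T$, $1_T$ is the indicator of $T$, $\circ$ the entrywise product. *)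

theory Defs
  imports Complex_Main
begin

text \<open>Matrices/vectors are functions on naturals; rows are indexed by {0..<m},
columns by {0..<n}.\<close>

definition nbhd :: "nat \<Rightarrow> (nat \<Rightarrow> nat \<Rightarrow> real) \<Rightarrow> nat set \<Rightarrow> nat set" where
  "nbhd m A T = {i \<in> {0..<m}. \<exists>j\<in>T. A i j > 0}"

text \<open>Column sums after row-normalizing A diag(y) to row sums r.\<close>
definition colsum :: "nat \<Rightarrow> nat \<Rightarrow> (nat \<Rightarrow> nat \<Rightarrow> real) \<Rightarrow> (nat \<Rightarrow> real) \<Rightarrow> (nat \<Rightarrow> real) \<Rightarrow> nat \<Rightarrow> real" where
  "colsum m n A r y j = (\<Sum>i\<in>{0..<m}. r i * (A i j * y j) / (\<Sum>k\<in>{0..<n}. A i k * y k))"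

definition margin_cond :: "nat \<Rightarrow> nat \<Rightarrow> (nat \<Rightarrow> nat \<Rightarrow> real) \<Rightarrow> (nat \<Rightarrow> real) \<Rightarrow> (nat \<Rightarrow> real)
     \<Rightarrow> (nat \<Rightarrow> real) \<Rightarrow> nat set \<Rightarrow> real \<Rightarrow> bool" where
  "margin_cond m n A r c y T g \<longleftrightarrow> g \<ge> 0 \<and> (\<exists>\<nu>::real.
      (\<forall>j\<in>T. colsum m n A r y j - c j \<le> \<nu> - g) \<and>
      (\<forall>j\<in>{0..<n} - T. \<nu> + g \<le> colsum m n A r y j - c j))"

definition has_margin :: "nat \<Rightarrow> nat \<Rightarrow> (nat \<Rightarrow> nat \<Rightarrow> real) \<Rightarrow> (nat \<Rightarrow> real) \<Rightarrow> (nat \<Rightarrow> real)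
     \<Rightarrow> (nat \<Rightarrow> real) \<Rightarrow> nat set \<Rightarrow> real \<Rightarrow> bool" where
  "has_margin m n A r c y T g \<longleftrightarrow> margin_cond m n A r c y T g \<and>
      (\<forall>g'. margin_cond m n A r c y T g' \<longrightarrow> g' \<le> g)"

definition proxy :: "nat \<Rightarrow> nat \<Rightarrow> (nat \<Rightarrow> nat \<Rightarrow> real) \<Rightarrow> (nat \<Rightarrow> real) \<Rightarrow> (nat \<Rightarrow> real)
     \<Rightarrow> nat set \<Rightarrow> real \<Rightarrow> real" where
  "proxy m n A r y T \<alpha> = (\<Sum>j\<in>T. colsum m n A r (\<lambda>k. if k \<in> T then \<alpha> * y k else y k) j)"

end

theory Submission
  imports Defs
begin

lemma proxy_eq:
  fixes A :: "nat \<Rightarrow> nat \<Rightarrow> real" and r y :: "nat \<Rightarrow> real"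
  assumes T_sub: "T \<subseteq> {0..<n}"
  shows "proxy m n A r y T \<alpha> = (\<Sum>i\<in>{0..<m}. r i * (\<alpha> * (\<Sum>k\<in>T. A i k * y k)) /
      (\<alpha> * (\<Sum>k\<in>T. A i k * y k) + (\<Sum>k\<in>{0..<n} - T. A i k * y k)))"
proof -
  have fT: "finite T" using T_sub finite_subset by blast
  have den: "(\<Sum>k\<in>{0..<n}. A i k * (if k \<in> T then \<alpha> * y k else y k)) =
      \<alpha> * (\<Sum>k\<in>T. A i k * y k) + (\<Sum>k\<in>{0..<n} - T. A i k * y k)" for i
  proof -
    have "(\<Sum>k\<in>{0..<n}. A i k * (if k \<in> T then \<alpha> * y k else y k)) =
       (\<Sum>k\<in>T. A i k * (if k \<in> T then \<alpha> * y k else y k)) +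
       (\<Sum>k\<in>{0..<n} - T. A i k * (if k \<in> T then \<alpha> * y k else y k))"
      using T_sub by (metis (no_types, lifting) finite_atLeastLessThan sum.subset_diff add.commute)
    also have "\<dots> = \<alpha> * (\<Sum>k\<in>T. A i k * y k) + (\<Sum>k\<in>{0..<n} - T. A i k * y k)"
      by (simp add: sum_distrib_left mult.left_commute)
    finally show ?thesis .
  qed
  have "proxy m n A r y T \<alpha> = (\<Sum>j\<in>T. \<Sum>i\<in>{0..<m}. r i * (A i j * (\<alpha> * y j)) /
      (\<alpha> * (\<Sum>k\<in>T. A i k * y k) + (\<Sum>k\<in>{0..<n} - T. A i k * y k)))"
    unfolding proxy_def colsum_def den by (intro sum.cong refl) auto
  also have "\<dots> = (\<Sum>i\<in>{0..<m}. \<Sum>j\<in>T. r i * (A i j * (\<alpha> * y j)) /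
      (\<alpha> * (\<Sum>k\<in>T. A i k * y k) + (\<Sum>k\<in>{0..<n} - T. A i k * y k)))"
    by (rule sum.swap)
  also have "\<dots> = (\<Sum>i\<in>{0..<m}. r i * (\<alpha> * (\<Sum>k\<in>T. A i k * y k)) /
      (\<alpha> * (\<Sum>k\<in>T. A i k * y k) + (\<Sum>k\<in>{0..<n} - T. A i k * y k)))"
    by (intro sum.cong refl) (simp add: sum_divide_distrib[symmetric] sum_distrib_left mult_ac)
  finally show ?thesis .
qed

theorem proposition6p9:
  fixes m n :: nat and A :: "nat \<Rightarrow> nat \<Rightarrow> real" and r c y :: "nat \<Rightarrow> real"
    and T :: "nat set" and \<gamma> \<delta> :: real
  assumes A_nonneg: "\<forall>i<m. \<forall>j<n. A i j \<ge> 0"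
    and A_rows: "\<forall>i<m. \<exists>j<n. A i j > 0"
    and r_pos: "\<forall>i<m. r i > 0"
    and c_pos: "\<forall>j<n. c j > 0"
    and sums_eq: "(\<Sum>i\<in>{0..<m}. r i) = (\<Sum>j\<in>{0..<n}. c j)"
    and y_pos: "\<forall>j<n. y j > 0"
    and T_ne: "T \<noteq> {}" and T_sub: "T \<subseteq> {0..<n}" and T_proper: "T \<noteq> {0..<n}"
    and margin: "has_margin m n A r c y T \<gamma>" and gamma_pos: "\<gamma> > 0"
    and big: "(\<Sum>i\<in>nbhd m A T. r i) \<ge> (\<Sum>j\<in>T. c j)"
    and delta: "0 \<le> \<delta>" "\<delta> < \<gamma>"
  shows "\<exists>\<alpha>::real. \<alpha> > 0 \<and> proxy m n A r y T \<alpha> = proxy m n A r y T 1 + \<delta>"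
proof -
  define S where "S i = (\<Sum>k\<in>T. A i k * y k)" for i
  define U where "U i = (\<Sum>k\<in>{0..<n} - T. A i k * y k)" for i
  define g where "g \<alpha> = (\<Sum>i\<in>{0..<m}. r i * (\<alpha> * S i) / (\<alpha> * S i + U i))" for \<alpha> :: real
  have pg: "proxy m n A r y T \<alpha> = g \<alpha>" for \<alpha>
    unfolding g_def S_def U_def by (rule proxy_eq[OF T_sub])
  have fT: "finite T" using T_sub finite_subset by blast
  have y_nn: "k < n \<Longrightarrow> 0 \<le> y k" for k using y_pos by (simp add: less_imp_le)
  have S_nn: "S i \<ge> 0" if "i < m" for i
    unfolding S_def using that T_sub A_nonneg y_pos
    by (intro sum_nonneg) (auto intro!: mult_nonneg_nonneg simp: y_nn)
  have U_nn: "U i \<ge> 0" if "i < m" for i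
    unfolding U_def using that A_nonneg y_pos
    by (intro sum_nonneg) (auto intro!: mult_nonneg_nonneg simp: y_nn)
  have SU_pos: "S i + U i > 0" if im: "i < m" for i
  proof -
    obtain j where j: "j < n" "A i j > 0" using A_rows im by blast
    have "S i + U i = (\<Sum>k\<in>{0..<n}. A i k * y k)"
      unfolding S_def U_def using T_sub
      by (metis (no_types, lifting) finite_atLeastLessThan sum.subset_diff add.commute)
    also have "\<dots> > 0"
    proof (rule sum_pos2[where i=j])
      show "finite {0..<n}" by simp
      show "j \<in> {0..<n}" using j by simp
      show "0 < A i j * y j" using j y_pos by simp
      show "\<And>k. k \<in> {0..<n} \<Longrightarrow> 0 \<le> A i k * y k"
        using A_nonneg y_pos im by (auto intro!: mult_nonneg_nonneg simp: y_nn)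
    qed
    finally show ?thesis .
  qed
  have den_pos: "\<alpha> * S i + U i > 0" if "i < m" "\<alpha> > 0" for i \<alpha>
  proof (cases "S i > 0")
    case True then show ?thesis using that U_nn[OF that(1)] by (simp add: add_pos_nonneg)
  next
    case False then have "S i = 0" using S_nn[OF that(1)] by simp
    then show ?thesis using SU_pos[OF that(1)] by simp
  qed
  have nb: "i \<in> nbhd m A T \<longleftrightarrow> i < m \<and> S i > 0" for i
  proof
    assume "i \<in> nbhd m A T"
    then obtain j where j: "i < m" "j \<in> T" "A i j > 0" unfolding nbhd_def by auto
    have "0 < A i j * y j" using j y_pos T_sub by auto
    also have "\<dots> \<le> S i" unfolding S_def using fT j T_sub A_nonneg y_pos
      by (intro member_le_sum) (auto intro!: mult_nonneg_nonneg simp: y_nn)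
    finally show "i < m \<and> S i > 0" using j by simp
  next
    assume h: "i < m \<and> S i > 0"
    have "\<exists>j\<in>T. A i j * y j \<noteq> 0"
    proof (rule ccontr)
      assume "\<not> (\<exists>j\<in>T. A i j * y j \<noteq> 0)"
      then have "S i = 0" unfolding S_def by (intro sum.neutral) blast
      with h show False by simp
    qed
    then obtain j where j: "j \<in> T" "A i j * y j \<noteq> 0" by blast
    have jn: "j < n" using j T_sub by auto
    have "A i j \<ge> 0" using A_nonneg h jn by blast
    moreover have "A i j \<noteq> 0" using j by auto
    ultimately have "A i j > 0" by linarith
    then show "i \<in> nbhd m A T" unfolding nbhd_def using h j by auto
  qed
  define L where "L = (\<Sum>i\<in>{0..<m}. if S i > 0 then r i else 0)"
  have L_eq: "L = (\<Sum>i\<in>nbhd m A T. r i)"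
  proof -
    have e: "nbhd m A T = {i \<in> {0..<m}. S i > 0}" using nb by auto
    show ?thesis unfolding L_def e by (rule sum.inter_filter[symmetric]) simp
  qed
  have lim: "(g \<longlongrightarrow> L) at_top"
    unfolding g_def L_def
  proof (intro tendsto_sum)
    fix i assume i: "i \<in> {0..<m}"
    show "((\<lambda>\<alpha>. r i * (\<alpha> * S i) / (\<alpha> * S i + U i)) \<longlongrightarrow> (if S i > 0 then r i else 0)) at_top"
    proof (cases "S i > 0")
      case False
      then have "S i = 0" using S_nn i by force
      then show ?thesis using False by simp
    next
      case True
      have ev: "\<forall>\<^sub>F \<alpha> in at_top. r i * S i / (S i + U i / \<alpha>) = r i * (\<alpha> * S i) / (\<alpha> * S i + U i)"
        using eventually_gt_at_top[of "0::real"]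
        by eventually_elim (simp add: field_simps)
      have "((\<lambda>\<alpha>. r i * S i / (S i + U i / \<alpha>)) \<longlongrightarrow> r i * S i / (S i + 0)) at_top"
        using True by (intro tendsto_intros tendsto_divide_0[OF tendsto_const] filterlim_at_top_imp_at_infinity filterlim_ident) auto
      then have "((\<lambda>\<alpha>. r i * S i / (S i + U i / \<alpha>)) \<longlongrightarrow> r i) at_top" using True by simp
      then show ?thesis using True tendsto_cong[OF ev] by simp
    qed
  qed
  have cont: "continuous_on {1..b} g" for b
    unfolding g_def
  proof (intro continuous_intros ballI)
    fix i x assume "i \<in> {0..<m}" "x \<in> {1..b}"
    then have "x * S i + U i > 0" using den_pos[of i x] by auto
    then show "x * S i + U i \<noteq> 0" by simp
  qed
  obtain \<nu> where nuT: "\<forall>j\<in>T. colsum m n A r y j - c j \<le> \<nu> - \<gamma>"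
    and nuC: "\<forall>j\<in>{0..<n} - T. \<nu> + \<gamma> \<le> colsum m n A r y j - c j"
    using margin unfolding has_margin_def margin_cond_def by blast
  have p1: "proxy m n A r y T 1 = (\<Sum>j\<in>T. colsum m n A r y j)"
  proof -
    have "(\<lambda>k. if k \<in> T then 1 * y k else y k) = y" by auto
    then show ?thesis unfolding proxy_def by simp
  qed
  have tot: "(\<Sum>j\<in>{0..<n}. colsum m n A r y j) = (\<Sum>i\<in>{0..<m}. r i)"
  proof -
    have "(\<Sum>j\<in>{0..<n}. colsum m n A r y j) =
        (\<Sum>i\<in>{0..<m}. \<Sum>j\<in>{0..<n}. r i * (A i j * y j) / (\<Sum>k\<in>{0..<n}. A i k * y k))"
      unfolding colsum_def by (rule sum.swap)
    also have "\<dots> = (\<Sum>i\<in>{0..<m}. r i)"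
    proof (intro sum.cong refl)
      fix i assume i: "i \<in> {0..<m}"
      have "S i + U i = (\<Sum>k\<in>{0..<n}. A i k * y k)"
        unfolding S_def U_def using T_sub
        by (metis (no_types, lifting) finite_atLeastLessThan sum.subset_diff add.commute)
      then have "(\<Sum>k\<in>{0..<n}. A i k * y k) \<noteq> 0" using SU_pos i by force
      then show "(\<Sum>j\<in>{0..<n}. r i * (A i j * y j) / (\<Sum>k\<in>{0..<n}. A i k * y k)) = r i"
        by (simp add: sum_divide_distrib[symmetric] sum_distrib_left[symmetric])
    qed
    finally show ?thesis .
  qed
  define a where "a = (\<Sum>j\<in>T. colsum m n A r y j - c j)"
  define b where "b = (\<Sum>j\<in>{0..<n} - T. colsum m n A r y j - c j)"
  have ab: "a + b = 0"
  proof -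
    have "a + b = (\<Sum>j\<in>{0..<n}. colsum m n A r y j - c j)"
      unfolding a_def b_def using T_sub
      by (metis (no_types, lifting) finite_atLeastLessThan sum.subset_diff add.commute)
    then show ?thesis using tot sums_eq by (simp add: sum_subtractf)
  qed
  have a_le: "a \<le> real (card T) * (\<nu> - \<gamma>)" unfolding a_def using nuT by (intro sum_bounded_above) auto
  have b_ge: "real (card ({0..<n} - T)) * (\<nu> + \<gamma>) \<le> b" unfolding b_def using nuC by (intro sum_bounded_below) auto
  have cT: "real (card T) \<ge> 1" using fT T_ne by (simp add: Suc_leI card_gt_0_iff)
  have cC: "real (card ({0..<n} - T)) \<ge> 1"
  proof -
    have "{0..<n} - T \<noteq> {}" using T_sub T_proper by blast
    then show ?thesis by (simp add: Suc_leI card_gt_0_iff)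
  qed
  have a_key: "a \<le> - \<gamma>"
  proof (cases "\<nu> \<ge> 0")
    case True
    have "real (card ({0..<n} - T)) * (\<nu> + \<gamma>) \<ge> 1 * (\<nu> + \<gamma>)"
      using cC True gamma_pos by (intro mult_right_mono) auto
    then have "b \<ge> \<nu> + \<gamma>" using b_ge by simp
    then show ?thesis using ab True by linarith
  next
    case False
    have "real (card T) * (\<nu> - \<gamma>) \<le> 1 * (\<nu> - \<gamma>)"
      using cT False gamma_pos by (intro mult_right_mono_neg) auto
    then have "a \<le> \<nu> - \<gamma>" using a_le by simp
    then show ?thesis using False by linarith
  qed
  have g1: "g 1 + \<gamma> \<le> (\<Sum>j\<in>T. c j)"
    using a_key p1 pg[of 1] unfolding a_def by (simp add: sum_subtractf)
  define t where "t = g 1 + \<delta>"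
  have tL: "t < L" using g1 big L_eq delta unfolding t_def by linarith
  have "\<forall>\<^sub>F \<alpha> in at_top. g \<alpha> > t \<and> \<alpha> \<ge> 1"
    using order_tendstoD(1)[OF lim tL] eventually_ge_at_top[of "1::real"] by eventually_elim auto
  then obtain bb where "\<forall>\<alpha>\<ge>bb. g \<alpha> > t \<and> \<alpha> \<ge> 1" unfolding eventually_at_top_linorder by blast
  then have bb: "g bb > t" "bb \<ge> 1" by auto
  have "\<exists>x. 1 \<le> x \<and> x \<le> bb \<and> g x = t"
    by (rule IVT') (use bb delta cont in \<open>auto simp: t_def\<close>)
  then obtain x where "1 \<le> x" "g x = t" by blast
  then show ?thesis using pg unfolding t_def by (intro exI[of _ x]) auto
qed

end
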